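(* Let $\mathcal{I}$ be an interval hypergraph on $[n]$ closed under intersection. Then the map $(i,j)\mapsto A_{ij}$ is a bijection from $\mathcal{IJ}_{\mathcal{I}}$ to the set of join irreducible elements of the lattice $P_{\mathcal{I}}$.
   Context: An interval hypergraph $\mathcal{I}$ on $[n]$ is a collection of intervals of $[n]$ containing all singletons; it is closed under intersection if $I,J\in\mathcal{I}$, $I\cap J\ne\varnothing$ imply $I\cap J\in\mathcal{I}$. An orientation is a map $O:\mathcal{I}\to[n]$ with $O(I)\in I$; it is acyclic if there are no $H_1,\dots,H_k$, $k\ge2$, with $O(H_{i+1})\in H_i\setminus\{O(H_i)\}$ for $i\in[k-1]$ and $O(H_1)\in H_k\setminus\{O(H_k)\}$. Orientations $O\ne O'$ are related by an increasing flip (from $O$ to $O'$) if there exist $1\le i<j\le n$ such that for all $H$: if $O(H)\ne O'(H)$ then $O(H)=i$, $O'(H)=j$; and if $\{i,j\}\subseteq H$ then $O(H)=i\iff O'(H)=j$. $P_{\mathcal{I}}$ is the transitive closure of the increasing flip relation on acyclic orientations (a lattice here). For $1\le i<j\le n$ such that some $I\in\mathcal{I}$ contains $\{i,j\}$, let $J_{ij}=\bigcap\{I\in\mathcal{I}:\{i,j\}\subseteq I\}$ and $\mu_{ij}=\min J_{ij}$. Let $\mathcal{IJ}_{\mathcal{I}}$ be the set of such pairs $(i,j)$ satisfying \[ i=\max\Big([\mu_{ij},j[\ \setminus\bigcup_{J\in\mathcal{I},\ J\subseteq[\mu_{ij},j[}\big(J\setminus\{\min J\}\big)\Big). \] For $(i,j)\in\mathcal{IJ}_{\mathcal{I}}$,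 $A_{ij}$ is the orientation with $A_{ij}(J)=j$ if $j\in J$ and $\min J\ge\mu_{ij}$, and $A_{ij}(J)=\min J$ otherwise (equivalently $A_{ij}=\mathrm{Or}_\pi$ for $\pi=1\cdots(\mu_{ij}-1)\,j\,\mu_{ij}\cdots(j-1)\,(j+1)\cdots n$, where $\mathrm{Or}_\pi(I)=\pi(\min\{k:\pi(k)\in I\})$). An element of a lattice is join irreducible if it is not the minimum and covers exactly one element. *)

theory Defs
  imports Main
begin

definition interval_hypergraph :: "nat \<Rightarrow> nat set set \<Rightarrow> bool" where
  "interval_hypergraph n \<I> \<longleftrightarrow>
     (\<forall>I\<in>\<I>. \<exists>a b. 1 \<le> a \<and> a \<le> b \<and> b \<le> n \<and> I = {a..b}) \<and>
     (\<forall>i\<in>{1..n}. {i} \<in> \<I>)"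

definition closed_under_intersection :: "nat set set \<Rightarrow> bool" where
  "closed_under_intersection \<I> \<longleftrightarrow>
     (\<forall>I\<in>\<I>. \<forall>J\<in>\<I>. I \<inter> J \<noteq> {} \<longrightarrow> I \<inter> J \<in> \<I>)"

text \<open>Orientations O : \<I> \<rightarrow> [n] with Or(I) \<in> I, represented extensionally:
  Or is 0 outside \<I> (0 is not an element of [n]).\<close>

definition orientations :: "nat set set \<Rightarrow> (nat set \<Rightarrow> nat) set" where
  "orientations \<I> = {Or. (\<forall>H\<in>\<I>. Or H \<in> H) \<and> (\<forall>H. H \<notin> \<I> \<longrightarrow> Or H = 0)}"

definition acyclic_orientation :: "nat set set \<Rightarrow> (nat set \<Rightarrow> nat) \<Rightarrow> bool" where
  "acyclic_orientation \<I> Or \<longleftrightarrow>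
     \<not> (\<exists>k::nat. \<exists>Hs::nat \<Rightarrow> nat set. k \<ge> 2 \<and> (\<forall>i<k. Hs i \<in> \<I>) \<and>
          (\<forall>i. i + 1 < k \<longrightarrow> Or (Hs (i + 1)) \<in> Hs i - {Or (Hs i)}) \<and>
          Or (Hs 0) \<in> Hs (k - 1) - {Or (Hs (k - 1))})"

definition acyclic_orientations :: "nat set set \<Rightarrow> (nat set \<Rightarrow> nat) set" where
  "acyclic_orientations \<I> = {Or \<in> orientations \<I>. acyclic_orientation \<I> Or}"

definition increasing_flip ::
  "nat \<Rightarrow> nat set set \<Rightarrow> (nat set \<Rightarrow> nat) \<Rightarrow> (nat set \<Rightarrow> nat) \<Rightarrow> bool" where
  "increasing_flip n \<I> Or Or' \<longleftrightarrow> Or \<noteq> Or' \<and>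
     (\<exists>i j. 1 \<le> i \<and> i < j \<and> j \<le> n \<and>
        (\<forall>H\<in>\<I>. (Or H \<noteq> Or' H \<longrightarrow> Or H = i \<and> Or' H = j) \<and>
                 ({i, j} \<subseteq> H \<longrightarrow> (Or H = i \<longleftrightarrow> Or' H = j))))"

definition P_le :: "nat \<Rightarrow> nat set set \<Rightarrow> (nat set \<Rightarrow> nat) \<Rightarrow> (nat set \<Rightarrow> nat) \<Rightarrow> bool" where
  "P_le n \<I> = (\<lambda>Or Or'. Or \<in> acyclic_orientations \<I> \<and> Or' \<in> acyclic_orientations \<I> \<and>
                       increasing_flip n \<I> Or Or')\<^sup>*\<^sup>*"

definition P_covers :: "nat \<Rightarrow> nat set set \<Rightarrow> (nat set \<Rightarrow> nat) \<Rightarrow> (nat set \<Rightarrow> nat) \<Rightarrow> bool" where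
  "P_covers n \<I> y x \<longleftrightarrow>  \<comment> \<open>y covers x\<close>
     x \<in> acyclic_orientations \<I> \<and> y \<in> acyclic_orientations \<I> \<and>
     P_le n \<I> x y \<and> x \<noteq> y \<and>
     \<not> (\<exists>z\<in>acyclic_orientations \<I>. P_le n \<I> x z \<and> P_le n \<I> z y \<and> z \<noteq> x \<and> z \<noteq> y)"

definition P_join_irreducible :: "nat \<Rightarrow> nat set set \<Rightarrow> (nat set \<Rightarrow> nat) \<Rightarrow> bool" where
  "P_join_irreducible n \<I> x \<longleftrightarrow>
     x \<in> acyclic_orientations \<I> \<and>
     \<not> (\<forall>y\<in>acyclic_orientations \<I>. P_le n \<I> x y) \<and>
     (\<exists>!y. P_covers n \<I> x y)"

definition J_set :: "nat set set \<Rightarrow> nat \<Rightarrow> nat \<Rightarrow> nat set" where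
  "J_set \<I> i j = \<Inter>{I \<in> \<I>. {i, j} \<subseteq> I}"

definition mu :: "nat set set \<Rightarrow> nat \<Rightarrow> nat \<Rightarrow> nat" where
  "mu \<I> i j = Min (J_set \<I> i j)"

definition IJ :: "nat \<Rightarrow> nat set set \<Rightarrow> (nat \<times> nat) set" where
  "IJ n \<I> = {(i, j). 1 \<le> i \<and> i < j \<and> j \<le> n \<and> (\<exists>I\<in>\<I>. {i, j} \<subseteq> I) \<and>
     i = Max ({mu \<I> i j..<j} -
              \<Union>{J - {Min J} | J. J \<in> \<I> \<and> J \<subseteq> {mu \<I> i j..<j}})}"

definition A_orient :: "nat set set \<Rightarrow> nat \<Rightarrow> nat \<Rightarrow> (nat set \<Rightarrow> nat)" where
  "A_orient \<I> i j = (\<lambda>J. if J \<in> \<I> then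
       (if j \<in> J \<and> Min J \<ge> mu \<I> i j then j else Min J) else 0)"

end

theory Submission
  imports Defs
begin

definition Xo :: "nat set set \<Rightarrow> nat \<Rightarrow> nat \<Rightarrow> nat set \<Rightarrow> nat" where
  "Xo II m j = (\<lambda>J. if J \<in> II then (if j \<in> J \<and> Min J \<ge> m then j else Min J) else 0)"

definition Arc :: "nat set set \<Rightarrow> (nat set \<Rightarrow> nat) \<Rightarrow> (nat \<times> nat) set" where
  "Arc II Or = {(Or H, b) | H b. H \<in> II \<and> b \<in> H \<and> b \<noteq> Or H}"

definition Rset :: "nat set set \<Rightarrow> nat \<Rightarrow> nat \<Rightarrow> nat set" where
  "Rset II m j = {m..<j} - \<Union>{J - {Min J} | J. J \<in> II \<and> J \<subseteq> {m..<j}}"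

lemma A_orient_Xo: "A_orient II i j = Xo II (mu II i j) j"
  unfolding A_orient_def Xo_def by simp

lemma IJ_Rset: "IJ n II = {(i, j). 1 \<le> i \<and> i < j \<and> j \<le> n \<and> (\<exists>I\<in>II. {i, j} \<subseteq> I) \<and>
     i = Max (Rset II (mu II i j) j)}"
  unfolding IJ_def Rset_def by simp

lemma rank_acyclic:
  fixes r :: "nat \<Rightarrow> nat"
  assumes "\<And>H b. H \<in> II \<Longrightarrow> b \<in> H \<Longrightarrow> b \<noteq> Or H \<Longrightarrow> r (Or H) < r b"
  shows "acyclic_orientation II Or"
  unfolding acyclic_orientation_def
proof
  assume "\<exists>k::nat. \<exists>Hs::nat \<Rightarrow> nat set. k \<ge> 2 \<and> (\<forall>i<k. Hs i \<in> II) \<and>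
          (\<forall>i. i + 1 < k \<longrightarrow> Or (Hs (i + 1)) \<in> Hs i - {Or (Hs i)}) \<and>
          Or (Hs 0) \<in> Hs (k - 1) - {Or (Hs (k - 1))}"
  then obtain k :: nat and Hs :: "nat \<Rightarrow> nat set" where k: "2 \<le> k" and Hs: "\<forall>i<k. Hs i \<in> II"
    and st: "\<forall>i. i + 1 < k \<longrightarrow> Or (Hs (i + 1)) \<in> Hs i - {Or (Hs i)}"
    and cl: "Or (Hs 0) \<in> Hs (k - 1) - {Or (Hs (k - 1))}" by blast
  have "t < k \<longrightarrow> r (Or (Hs 0)) + t \<le> r (Or (Hs t))" for t
  proof (induction t)
    case 0 then show ?case by simp
  next
    case (Suc t)
    show ?case
    proof
      assume "Suc t < k"
      then have "r (Or (Hs t)) < r (Or (Hs (t+1)))"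
        using st Hs assms[of "Hs t" "Or (Hs (t+1))"] by auto
      then show "r (Or (Hs 0)) + Suc t \<le> r (Or (Hs (Suc t)))" using Suc \<open>Suc t < k\<close> by simp
    qed
  qed
  then have "r (Or (Hs 0)) + (k - 1) \<le> r (Or (Hs (k-1)))" using k
  proof -
    assume a: "\<And>t. t < k \<longrightarrow> r (Or (Hs 0)) + t \<le> r (Or (Hs t))"
    have "k - 1 < k" using k by simp
    then show ?thesis using a[of "k-1"] by blast
  qed
  moreover have "r (Or (Hs (k-1))) < r (Or (Hs 0))"
    using cl Hs assms[of "Hs (k-1)" "Or (Hs 0)"] k by auto
  ultimately show False by simp
qed

lemma acyc_from_Arc:
  assumes "acyclic (Arc II Or)"
  shows "acyclic_orientation II Or"
  unfolding acyclic_orientation_def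
proof
  assume "\<exists>k::nat. \<exists>Hs::nat \<Rightarrow> nat set. k \<ge> 2 \<and> (\<forall>i<k. Hs i \<in> II) \<and>
          (\<forall>i. i + 1 < k \<longrightarrow> Or (Hs (i + 1)) \<in> Hs i - {Or (Hs i)}) \<and>
          Or (Hs 0) \<in> Hs (k - 1) - {Or (Hs (k - 1))}"
  then obtain k :: nat and Hs :: "nat \<Rightarrow> nat set" where k: "2 \<le> k" and Hs: "\<forall>i<k. Hs i \<in> II"
    and st: "\<forall>i. i + 1 < k \<longrightarrow> Or (Hs (i + 1)) \<in> Hs i - {Or (Hs i)}"
    and cl: "Or (Hs 0) \<in> Hs (k - 1) - {Or (Hs (k - 1))}" by blast
  have "t < k \<longrightarrow> (Or (Hs 0), Or (Hs t)) \<in> (Arc II Or)\<^sup>*" for t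
  proof (induction t)
    case 0 then show ?case by simp
  next
    case (Suc t)
    show ?case
    proof
      assume "Suc t < k"
      then have "(Or (Hs t), Or (Hs (t+1))) \<in> Arc II Or"
        using st Hs unfolding Arc_def by force
      then show "(Or (Hs 0), Or (Hs (Suc t))) \<in> (Arc II Or)\<^sup>*" using Suc \<open>Suc t < k\<close>
        by (metis Suc_eq_plus1 Suc_lessD rtrancl.rtrancl_into_rtrancl)
    qed
  qed
  then have "(Or (Hs 0), Or (Hs (k-1))) \<in> (Arc II Or)\<^sup>*" using k by simp
  moreover have "(Or (Hs (k-1)), Or (Hs 0)) \<in> Arc II Or"
    using cl Hs k unfolding Arc_def by force
  ultimately have "(Or (Hs 0), Or (Hs 0)) \<in> (Arc II Or)\<^sup>+" by simp
  then show False using assms unfolding acyclic_def by blast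
qed

lemma Arc_from_acyc:
  assumes "acyclic_orientation II Or"
  shows "acyclic (Arc II Or)"
  unfolding acyclic_def
proof (intro allI notI)
  fix v assume "(v, v) \<in> (Arc II Or)\<^sup>+"
  then obtain m where m: "m > 0" "(v, v) \<in> (Arc II Or) ^^ m"
    using trancl_power by blast
  then obtain f where f0: "f 0 = v" and fm: "f m = v" and fs: "\<forall>i<m. (f i, f (Suc i)) \<in> Arc II Or"
    using relpow_fun_conv by metis
  define Hs where "Hs = (\<lambda>t. SOME H. H \<in> II \<and> f t = Or H \<and> f (Suc t) \<in> H \<and> f (Suc t) \<noteq> Or H)"
  have HsP: "Hs t \<in> II \<and> f t = Or (Hs t) \<and> f (Suc t) \<in> Hs t \<and> f (Suc t) \<noteq> Or (Hs t)" if "t < m" for t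
  proof -
    have "\<exists>H. H \<in> II \<and> f t = Or H \<and> f (Suc t) \<in> H \<and> f (Suc t) \<noteq> Or H"
      using fs that unfolding Arc_def by blast
    then show ?thesis unfolding Hs_def by (rule someI_ex)
  qed
  have "m \<noteq> 1"
  proof
    assume "m = 1"
    then show False using HsP[of 0] f0 fm by simp
  qed
  with m have m2: "2 \<le> m" by simp
  have "\<exists>k::nat. \<exists>Hs::nat \<Rightarrow> nat set. k \<ge> 2 \<and> (\<forall>i<k. Hs i \<in> II) \<and>
       (\<forall>i. i + 1 < k \<longrightarrow> Or (Hs (i + 1)) \<in> Hs i - {Or (Hs i)}) \<and>
       Or (Hs 0) \<in> Hs (k - 1) - {Or (Hs (k - 1))}"
  proof (intro exI conjI allI impI)
    show "m \<ge> 2" by fact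
    show "Hs i \<in> II" if "i < m" for i using HsP that by blast
    show "Or (Hs (i + 1)) \<in> Hs i - {Or (Hs i)}" if "i + 1 < m" for i
      using HsP[of i] HsP[of "i+1"] that by auto
    show "Or (Hs 0) \<in> Hs (m - 1) - {Or (Hs (m - 1))}"
      using HsP[of 0] HsP[of "m-1"] m2 f0 fm by auto
  qed
  then show False using assms unfolding acyclic_orientation_def by blast
qed

locale ih =
  fixes n :: nat and II :: "nat set set"
  assumes ih: "interval_hypergraph n II"
    and ci: "closed_under_intersection II"
begin

lemma intv: "H \<in> II \<Longrightarrow> \<exists>a b. 1 \<le> a \<and> a \<le> b \<and> b \<le> n \<and> H = {a..b}"
  using ih unfolding interval_hypergraph_def by blast

lemma H_basic:
  assumes "H \<in> II"
  shows "finite H" "H \<noteq> {}" "H \<subseteq> {1..n}" "Min H \<in> H"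
  using intv[OF assms] by auto

lemma Min_le: "H \<in> II \<Longrightarrow> c \<in> H \<Longrightarrow> Min H \<le> c"
  using H_basic by simp

lemma conv: "H \<in> II \<Longrightarrow> a \<in> H \<Longrightarrow> b \<in> H \<Longrightarrow> a \<le> c \<Longrightarrow> c \<le> b \<Longrightarrow> c \<in> H"
  using intv by fastforce

lemma mem_ge1: "H \<in> II \<Longrightarrow> c \<in> H \<Longrightarrow> 1 \<le> c \<and> c \<le> n"
  using H_basic(3) by fastforce

lemma Min_ge1: "H \<in> II \<Longrightarrow> 1 \<le> Min H"
  using H_basic mem_ge1 by blast

lemma finII: "finite II"
proof -
  have "II \<subseteq> Pow {1..n}" using H_basic(3) by blast
  then show ?thesis by (rule finite_subset) simp
qed

lemma single: "i \<in> {1..n} \<Longrightarrow> {i} \<in> II"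
  using ih unfolding interval_hypergraph_def by blast


lemma orient_out: "Or \<in> orientations II \<Longrightarrow> H \<notin> II \<Longrightarrow> Or H = 0"
  unfolding orientations_def by blast

lemma orient_in: "Or \<in> orientations II \<Longrightarrow> H \<in> II \<Longrightarrow> Or H \<in> H"
  unfolding orientations_def by blast

lemma AO_iff: "Or \<in> acyclic_orientations II \<longleftrightarrow> Or \<in> orientations II \<and> acyclic_orientation II Or"
  unfolding acyclic_orientations_def by blast

lemma orient_eq:
  assumes "a \<in> orientations II" "b \<in> orientations II" "\<And>H. H \<in> II \<Longrightarrow> a H = b H"
  shows "a = b"
proof
  fix H show "a H = b H"
    using assms orient_out[of a H] orient_out[of b H] by (cases "H \<in> II") auto
qed

lemma flip_cw:
  assumes "a \<in> orientations II" "b \<in> orientations II" "increasing_flip n II a b"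
  shows "a H \<le> b H"
proof (cases "H \<in> II")
  case True
  from assms(3) obtain i j where ij: "i < j" and
    h: "\<forall>H\<in>II. (a H \<noteq> b H \<longrightarrow> a H = i \<and> b H = j)"
    unfolding increasing_flip_def by blast
  show ?thesis using h True ij by (cases "a H = b H") auto
next
  case False
  then show ?thesis using orient_out[OF assms(1) False] orient_out[OF assms(2) False] by simp
qed

lemma P_le_cw: "P_le n II a b \<Longrightarrow> a H \<le> b H"
  unfolding P_le_def
proof (induction rule: rtranclp_induct)
  case base then show ?case by simp
next
  case (step y z)
  then have "y H \<le> z H" using flip_cw AO_iff by blast
  then show ?case using step by simp
qed

lemma P_le_step: "a \<in> acyclic_orientations II \<Longrightarrow> b \<in> acyclic_orientations II \<Longrightarrow>
    increasing_flip n II a b \<Longrightarrow> P_le n II a b"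
  unfolding P_le_def by (simp add: r_into_rtranclp)

lemma P_le_trans: "P_le n II a b \<Longrightarrow> P_le n II b c \<Longrightarrow> P_le n II a c"
  unfolding P_le_def by simp

lemma P_le_last:
  assumes "P_le n II z x" "z \<noteq> x"
  shows "\<exists>w. P_le n II z w \<and> w \<in> acyclic_orientations II \<and> x \<in> acyclic_orientations II \<and>
      increasing_flip n II w x"
proof -
  let ?R = "\<lambda>Or Or'. Or \<in> acyclic_orientations II \<and> Or' \<in> acyclic_orientations II \<and>
                       increasing_flip n II Or Or'"
  have "?R\<^sup>*\<^sup>* z x" using assms(1) unfolding P_le_def .
  then show ?thesis
  proof (cases rule: rtranclp.cases)
    case rtrancl_refl then show ?thesis using assms(2) by simp
  next
    case (rtrancl_into_rtrancl w) then show ?thesis unfolding P_le_def by blast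
  qed
qed

lemma P_le_first:
  assumes "P_le n II z x" "z \<noteq> x"
  shows "z \<in> acyclic_orientations II"
proof -
  let ?R = "\<lambda>Or Or'. Or \<in> acyclic_orientations II \<and> Or' \<in> acyclic_orientations II \<and>
                       increasing_flip n II Or Or'"
  have "?R\<^sup>*\<^sup>* z x" using assms(1) unfolding P_le_def .
  then show ?thesis
  proof (cases rule: converse_rtranclpE)
    case base then show ?thesis using assms(2) by simp
  next
    case (step w) then show ?thesis by blast
  qed
qed

definition phi :: "(nat set \<Rightarrow> nat) \<Rightarrow> nat" where
  "phi z = (\<Sum>H\<in>II. z H)"

lemma phi_strict:
  assumes "P_le n II a b" "a \<noteq> b"
  shows "phi a < phi b"
proof -
  have aA: "a \<in> acyclic_orientations II" using P_le_first assms by blast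
  obtain w where "b \<in> acyclic_orientations II" using P_le_last assms by blast
  then have ao: "a \<in> orientations II" "b \<in> orientations II" using aA AO_iff by auto
  have "\<exists>H\<in>II. a H \<noteq> b H" using orient_eq[OF ao] assms(2) by blast
  then obtain H where "H \<in> II" "a H < b H" using P_le_cw[OF assms(1)] le_neq_trans by blast
  then show ?thesis unfolding phi_def
    using sum_strict_mono_ex1[OF finII, of a b] P_le_cw[OF assms(1)] by blast
qed

lemma covers_flip:
  assumes "P_covers n II x c"
  shows "c \<in> acyclic_orientations II \<and> x \<in> acyclic_orientations II \<and> increasing_flip n II c x"
proof -
  have c: "c \<in> acyclic_orientations II" "x \<in> acyclic_orientations II" "P_le n II c x" "c \<noteq> x"
    and nz: "\<not> (\<exists>z\<in>acyclic_orientations II. P_le n II c z \<and> P_le n II z x \<and> z \<noteq> c \<and> z \<noteq> x)"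
    using assms unfolding P_covers_def by auto
  obtain w where w: "P_le n II c w" "w \<in> acyclic_orientations II" "increasing_flip n II w x"
    using P_le_last[OF c(3,4)] by blast
  have "w \<noteq> x" using w(3) unfolding increasing_flip_def by blast
  moreover have "P_le n II w x" using P_le_step w c by blast
  ultimately have "w = c" using nz w by blast
  then show ?thesis using w c by blast
qed

lemma cover_above:
  assumes "P_le n II y x" "y \<noteq> x"
  shows "\<exists>c. P_covers n II x c \<and> P_le n II y c"
proof -
  define Z where "Z = {z. z \<in> acyclic_orientations II \<and> P_le n II y z \<and> P_le n II z x \<and> z \<noteq> x}"
  have yZ: "y \<in> Z" unfolding Z_def using assms P_le_first[OF assms] by (simp add: P_le_def)
  have bd: "\<forall>z. z \<in> Z \<longrightarrow> phi z < phi x" unfolding Z_def using phi_strict by blast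
  obtain c where cZ: "c \<in> Z" and cmax: "\<forall>z. z \<in> Z \<longrightarrow> phi z \<le> phi c"
    using ex_has_greatest_nat[of "\<lambda>z. z \<in> Z" y phi "phi x", OF yZ bd] by blast
  have xA: "x \<in> acyclic_orientations II" using P_le_last assms by blast
  have "P_covers n II x c"
    unfolding P_covers_def
  proof (intro conjI)
    show "c \<in> acyclic_orientations II" "P_le n II c x" "c \<noteq> x" using cZ unfolding Z_def by auto
    show "x \<in> acyclic_orientations II" by fact
    show "\<not> (\<exists>z\<in>acyclic_orientations II. P_le n II c z \<and> P_le n II z x \<and> z \<noteq> c \<and> z \<noteq> x)"
    proof
      assume "\<exists>z\<in>acyclic_orientations II. P_le n II c z \<and> P_le n II z x \<and> z \<noteq> c \<and> z \<noteq> x"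
      then obtain z where z: "z \<in> acyclic_orientations II" "P_le n II c z" "P_le n II z x" "z \<noteq> c" "z \<noteq> x"
        by blast
      have "z \<in> Z" using z cZ P_le_trans unfolding Z_def by blast
      moreover have "phi c < phi z" using phi_strict z by blast
      ultimately show False using cmax by fastforce
    qed
  qed
  then show ?thesis using cZ unfolding Z_def by blast
qed

lemma cross:
  assumes xo: "x \<in> orientations II" and wv: "(w, v) \<in> (Arc II x)\<^sup>*" and jw: "j < w"
  shows "j < v \<or> (w, j) \<in> (Arc II x)\<^sup>+"
  using wv
proof (induction rule: rtrancl_induct)
  case base then show ?case using jw by simp
next
  case (step u v)
  show ?case
  proof (cases "(w, j) \<in> (Arc II x)\<^sup>+")
    case True then show ?thesis by simp
  next
    case False
    then have ju: "j < u" using step by simp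
    obtain G where G: "G \<in> II" "u = x G" "v \<in> G" "v \<noteq> x G"
      using step(2) unfolding Arc_def by blast
    have uG: "u \<in> G" using orient_in[OF xo G(1)] G by simp
    consider "j < v" | "v = j" | "v < j" by linarith
    then show ?thesis
    proof cases
      case 1 then show ?thesis by simp
    next
      case 2 then show ?thesis using step by simp
    next
      case 3
      then have "j \<in> G" using conv[OF G(1) G(3) uG] ju by simp
      then have "(u, j) \<in> Arc II x" using G ju unfolding Arc_def by fastforce
      then show ?thesis using rtrancl_into_trancl1[OF step(1)] by blast
    qed
  qed
qed

lemma Arc_fin: "finite (Arc II x)" if "x \<in> orientations II"
proof -
  have "Arc II x \<subseteq> {1..n} \<times> {1..n}"
    unfolding Arc_def using that orient_in H_basic(3) by fastforce
  then show ?thesis by (rule finite_subset) simp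
qed


end

context ih begin

lemma E1:
  assumes xA: "x \<in> acyclic_orientations II" and H0: "H0 \<in> II" "x H0 = j" "Min H0 \<noteq> j"
  shows "\<exists>y. P_le n II y x \<and> y \<noteq> x \<and> (\<forall>H. x H \<noteq> j \<longrightarrow> y H = x H)"
proof -
  have xo: "x \<in> orientations II" and xa: "acyclic (Arc II x)"
    using xA AO_iff Arc_from_acyc by auto
  let ?Ar = "Arc II x"
  have jH0: "j \<in> H0" using orient_in[OF xo H0(1)] H0 by simp
  have mj: "Min H0 < j" using Min_le[OF H0(1) jH0] H0(3) by simp
  define A where "A = {a. a < j \<and> (j, a) \<in> ?Ar}"
  have "(j, Min H0) \<in> ?Ar" unfolding Arc_def using H0 H_basic(4)[OF H0(1)] by force
  then have mA: "Min H0 \<in> A" unfolding A_def using mj by simp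
  have wf: "wf (?Ar\<^sup>+)" using wf_trancl finite_acyclic_wf Arc_fin[OF xo] xa by blast
  obtain i where iA: "i \<in> A" and imin: "\<And>w. (w, i) \<in> ?Ar\<^sup>+ \<Longrightarrow> w \<notin> A"
    using wfE_min[OF wf mA] by blast
  have ij: "i < j" and jiA: "(j, i) \<in> ?Ar" using iA A_def by auto
  obtain G where G: "G \<in> II" "x G = j" "i \<in> G"
    using jiA unfolding Arc_def by blast
  define y where "y = (\<lambda>H. if H \<in> II \<and> x H = j \<and> i \<in> H then i else x H)"
  have yo: "y \<in> orientations II"
    unfolding y_def orientations_def using xo orient_in orient_out by auto
  have yne: "y \<noteq> x"
  proof
    assume "y = x"
    then have "y G = x G" by simp
    then show False using G ij unfolding y_def by simp
  qed
  have yeq: "\<forall>H. x H \<noteq> j \<longrightarrow> y H = x H" unfolding y_def by auto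
  have nij: "j \<notin> H" if "H \<in> II" "x H = i" for H
  proof
    assume "j \<in> H"
    then have "(i, j) \<in> ?Ar" unfolding Arc_def using that ij by force
    then have "(j, j) \<in> ?Ar\<^sup>+" using jiA by (meson r_into_trancl' trancl_into_trancl)
    then show False using xa unfolding acyclic_def by blast
  qed
  have i1: "1 \<le> i" using mem_ge1 G by blast
  have jn: "j \<le> n" using mem_ge1[OF G(1)] orient_in[OF xo G(1)] G(2) by simp
  have fl: "\<forall>H\<in>II. (y H \<noteq> x H \<longrightarrow> y H = i \<and> x H = j) \<and> ({i, j} \<subseteq> H \<longrightarrow> (y H = i \<longleftrightarrow> x H = j))"
  proof
    fix H assume H: "H \<in> II"
    show "(y H \<noteq> x H \<longrightarrow> y H = i \<and> x H = j) \<and> ({i, j} \<subseteq> H \<longrightarrow> (y H = i \<longleftrightarrow> x H = j))"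
    proof (cases "x H = j \<and> i \<in> H")
      case True then show ?thesis using H unfolding y_def by simp
    next
      case False
      then have yH: "y H = x H" unfolding y_def by auto
      show ?thesis
      proof (rule conjI; rule impI)
        assume "y H \<noteq> x H" then show "y H = i \<and> x H = j" using yH by simp
      next
        assume ij2: "{i, j} \<subseteq> H"
        then have "x H \<noteq> j" using False by simp
        moreover have "x H \<noteq> i" using nij H ij2 by blast
        ultimately show "(y H = i) = (x H = j)" using yH by simp
      qed
    qed
  qed
  have flip: "increasing_flip n II y x"
    unfolding increasing_flip_def
    by (rule conjI[OF yne], rule exI[of _ i], rule exI[of _ j]) (use i1 ij jn fl in blast)
  define r where "r = ?Ar - {(j, i)}"
  have sub: "Arc II y \<subseteq> (insert (i, j) r)\<^sup>+"
  proof
    fix p assume "p \<in> Arc II y"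
    then obtain H b where Hb: "p = (y H, b)" "H \<in> II" "b \<in> H" "b \<noteq> y H" unfolding Arc_def by blast
    show "p \<in> (insert (i, j) r)\<^sup>+"
    proof (cases "x H = j \<and> i \<in> H")
      case True
      then have yH: "y H = i" using Hb unfolding y_def by simp
      show ?thesis
      proof (cases "b = j")
        case True then show ?thesis using Hb yH by (simp add: r_into_trancl')
      next
        case False
        then have "(j, b) \<in> r" unfolding r_def Arc_def using Hb \<open>x H = j \<and> i \<in> H\<close> yH by force
        then have "(j, b) \<in> (insert (i, j) r)\<^sup>+" by (simp add: r_into_trancl')
        moreover have "(i, j) \<in> (insert (i, j) r)\<^sup>+" by (simp add: r_into_trancl')
        ultimately have "(i, b) \<in> (insert (i, j) r)\<^sup>+" by (rule trancl_trans[rotated])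
        then show ?thesis using Hb yH by simp
      qed
    next
      case False
      then have yH: "y H = x H" unfolding y_def by auto
      have "(x H, b) \<in> ?Ar" using Hb yH unfolding Arc_def by auto
      moreover have "(x H, b) \<noteq> (j, i)" using False Hb by auto
      ultimately have "(x H, b) \<in> insert (i, j) r" unfolding r_def by blast
      then show ?thesis using Hb yH by (simp add: r_into_trancl')
    qed
  qed
  have rA: "r \<subseteq> ?Ar" unfolding r_def by blast
  have ya: "acyclic (Arc II y)"
    unfolding acyclic_def
  proof (intro allI notI)
    fix v assume "(v, v) \<in> (Arc II y)\<^sup>+"
    then have "(v, v) \<in> ((insert (i, j) r)\<^sup>+)\<^sup>+" using trancl_mono sub by blast
    then have "(v, v) \<in> (insert (i, j) r)\<^sup>+" by simp
    then have "(v, v) \<in> r\<^sup>+ \<or> ((v, i) \<in> r\<^sup>* \<and> (j, v) \<in> r\<^sup>*)" by (simp add: trancl_insert)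
    then consider "(v, v) \<in> r\<^sup>+" | "(v, i) \<in> r\<^sup>*" "(j, v) \<in> r\<^sup>*" by blast
    then show False
    proof cases
      case 1
      then have "(v, v) \<in> ?Ar\<^sup>+" using trancl_mono rA by blast
      then show False using xa unfolding acyclic_def by blast
    next
      case 2
      then have "(j, i) \<in> r\<^sup>*" using rtrancl_trans by metis
      then have "(j, i) \<in> r\<^sup>+" using rtranclD[of j i r] ij by simp
      then show False
      proof (rule converse_tranclE)
        assume "(j, i) \<in> r" then show False unfolding r_def by simp
      next
        fix w assume step: "(j, w) \<in> r" "(w, i) \<in> r\<^sup>+"
        have wi: "w \<noteq> i" using step unfolding r_def by auto
        have jw: "(j, w) \<in> ?Ar" using step rA by blast
        have wiA: "(w, i) \<in> ?Ar\<^sup>+" using step(2) trancl_mono rA by blast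
        have "w \<noteq> j"
        proof
          assume "w = j"
          then show False using jw xa unfolding acyclic_def by blast
        qed
        moreover have "\<not> j < w"
        proof
          assume "j < w"
          then have "(w, j) \<in> ?Ar\<^sup>+" using cross[OF xo trancl_into_rtrancl[OF wiA] \<open>j < w\<close>] ij by simp
          then have "(j, j) \<in> ?Ar\<^sup>+" using jw by (meson trancl_into_trancl2)
          then show False using xa unfolding acyclic_def by blast
        qed
        ultimately have "w \<in> A" unfolding A_def using jw by simp
        then show False using imin wiA by blast
      qed
    qed
  qed
  have yA: "y \<in> acyclic_orientations II" using yo ya acyc_from_Arc AO_iff by blast
  have "P_le n II y x" using P_le_step[OF yA xA flip] .
  then show ?thesis using yne yeq by blast
qed

lemma nonmin_cover:
  assumes xA: "x \<in> acyclic_orientations II" and H0: "H0 \<in> II" "x H0 = j" "Min H0 \<noteq> j"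
  shows "\<exists>c. P_covers n II x c \<and> (\<forall>H. x H \<noteq> j \<longrightarrow> c H = x H)"
proof -
  obtain y where y: "P_le n II y x" "y \<noteq> x" "\<forall>H. x H \<noteq> j \<longrightarrow> y H = x H"
    using E1[OF assms] by blast
  obtain c where c: "P_covers n II x c" "P_le n II y c" using cover_above[OF y(1,2)] by blast
  have "P_le n II c x" using c(1) unfolding P_covers_def by blast
  have "\<forall>H. x H \<noteq> j \<longrightarrow> c H = x H"
  proof (intro allI impI)
    fix H assume xH: "x H \<noteq> j"
    have "y H \<le> c H" by (rule P_le_cw[OF c(2)])
    moreover have "c H \<le> x H" by (rule P_le_cw[OF \<open>P_le n II c x\<close>])
    ultimately show "c H = x H" using y(3) xH by simp
  qed
  then show ?thesis using c by blast
qed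

lemma JI_single:
  assumes ji: "P_join_irreducible n II x"
  shows "\<exists>j. (\<exists>H0\<in>II. x H0 = j \<and> Min H0 \<noteq> j) \<and> (\<forall>H\<in>II. x H = j \<or> x H = Min H)"
proof -
  have xA: "x \<in> acyclic_orientations II" and ex1: "\<exists>!c. P_covers n II x c"
    using ji unfolding P_join_irreducible_def by auto
  then obtain c where c: "P_covers n II x c" by blast
  have cx: "c \<noteq> x" using c unfolding P_covers_def by blast
  have xo: "x \<in> orientations II" using xA AO_iff by blast
  have "\<exists>H0\<in>II. x H0 \<noteq> Min H0"
  proof (rule ccontr)
    assume "\<not> (\<exists>H0\<in>II. x H0 \<noteq> Min H0)"
    then have mn: "\<forall>H\<in>II. x H = Min H" by blast
    have cA: "c \<in> acyclic_orientations II" and cle: "P_le n II c x"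
      using c unfolding P_covers_def by auto
    have co: "c \<in> orientations II" using cA AO_iff by blast
    have "c = x"
    proof (rule orient_eq[OF co xo])
      fix H assume H: "H \<in> II"
      have "c H \<le> x H" using P_le_cw[OF cle] .
      moreover have "Min H \<le> c H" using Min_le[OF H orient_in[OF co H]] .
      ultimately show "c H = x H" using mn H by simp
    qed
    then show False using cx by simp
  qed
  then obtain H0 where H0: "H0 \<in> II" "x H0 \<noteq> Min H0" by blast
  define j where "j = x H0"
  have jm: "Min H0 \<noteq> j" using H0(2) unfolding j_def by simp
  obtain c1 where c1: "P_covers n II x c1" "\<forall>H. x H \<noteq> j \<longrightarrow> c1 H = x H"
    using nonmin_cover[OF xA H0(1) j_def[symmetric] jm] by blast
  have c1c: "c1 = c" using ex1 c c1 by blast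
  have "\<forall>H\<in>II. x H = j \<or> x H = Min H"
  proof (intro ballI)
    fix H assume H: "H \<in> II"
    show "x H = j \<or> x H = Min H"
    proof (rule ccontr)
      assume a: "\<not> (x H = j \<or> x H = Min H)"
      have a2: "Min H \<noteq> x H" using a by simp
      obtain c2 where c2: "P_covers n II x c2" "\<forall>G. x G \<noteq> x H \<longrightarrow> c2 G = x G"
        using nonmin_cover[OF xA H refl a2] by blast
      have c2c: "c2 = c" using ex1 c c2 by blast
      have "\<exists>G. c G \<noteq> x G" using cx by (simp add: fun_eq_iff)
      then obtain G where "c G \<noteq> x G" by blast
      then have "c1 G \<noteq> x G" "c2 G \<noteq> x G" using c1c c2c by auto
      then have "x G = j" "x G = x H" using c1(2) c2(2) by blast+
      then show False using a by simp
    qed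
  qed
  then show ?thesis using H0(1) jm j_def by blast
qed

lemma single_form:
  assumes xA: "x \<in> acyclic_orientations II"
    and vals: "\<forall>H\<in>II. x H = j \<or> x H = Min H"
    and H0: "H0 \<in> II" "x H0 = j" "Min H0 \<noteq> j"
    and H0min: "\<And>H. H \<in> II \<Longrightarrow> x H = j \<Longrightarrow> Min H \<noteq> j \<Longrightarrow> Min H0 \<le> Min H"
  shows "x = Xo II (Min H0) j"
proof -
  have xo: "x \<in> orientations II" and xac: "acyclic_orientation II x" using xA AO_iff by auto
  have jH0: "j \<in> H0" using orient_in[OF xo H0(1)] H0 by simp
  have mj: "Min H0 < j" using Min_le[OF H0(1) jH0] H0(3) by simp
  show ?thesis
  proof (rule orient_eq[OF xo])
    show "Xo II (Min H0) j \<in> orientations II"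
      unfolding orientations_def Xo_def using H_basic(4) by auto
    fix H assume H: "H \<in> II"
    show "x H = Xo II (Min H0) j H"
    proof (cases "x H = j")
      case True
      have jH: "j \<in> H" using orient_in[OF xo H] True by simp
      have "Min H0 \<le> Min H"
      proof (cases "Min H = j")
        case True then show ?thesis using mj by simp
      next
        case False then show ?thesis using H0min H \<open>x H = j\<close> by blast
      qed
      then show ?thesis unfolding Xo_def using H jH True by simp
    next
      case False
      then have xm: "x H = Min H" using vals H by blast
      have "\<not> (j \<in> H \<and> Min H0 \<le> Min H)"
      proof
        assume a: "j \<in> H \<and> Min H0 \<le> Min H"
        have mjH: "Min H \<noteq> j" using False xm by simp
        have "Min H \<le> j" using Min_le[OF H] a by blast
        then have mlt: "Min H < j" using mjH by simp
        have mH0: "Min H \<in> H0" using conv[OF H0(1) H_basic(4)[OF H0(1)] jH0] a mlt by simp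
        define Hs where "Hs = (\<lambda>t::nat. if t = 0 then H0 else H)"
        have "\<exists>k::nat. \<exists>Hs::nat \<Rightarrow> nat set. k \<ge> 2 \<and> (\<forall>i<k. Hs i \<in> II) \<and>
          (\<forall>i. i + 1 < k \<longrightarrow> x (Hs (i + 1)) \<in> Hs i - {x (Hs i)}) \<and>
          x (Hs 0) \<in> Hs (k - 1) - {x (Hs (k - 1))}"
        proof (rule exI[of _ 2], rule exI[of _ Hs], intro conjI allI impI)
          show "(2::nat) \<le> 2" by simp
          show "Hs i \<in> II" if "i < 2" for i using H H0 unfolding Hs_def by simp
          show "x (Hs (i + 1)) \<in> Hs i - {x (Hs i)}" if "i + 1 < 2" for i
          proof -
            have "i = 0" using that by simp
            then show ?thesis using mH0 xm H0(2) mjH by (simp add: Hs_def)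
          qed
          show "x (Hs 0) \<in> Hs (2 - 1) - {x (Hs (2 - 1))}"
            using a H0(2) xm mjH by (simp add: Hs_def)
        qed
        then show False using xac unfolding acyclic_orientation_def by blast
      qed
      then show ?thesis unfolding Xo_def using H xm by auto
    qed
  qed
qed

end

lemma two_cycle:
  assumes ac: "acyclic_orientation II Or" and AB: "A \<in> II" "B \<in> II"
    and c1: "Or B \<in> A" "Or B \<noteq> Or A" and c2: "Or A \<in> B" "Or A \<noteq> Or B"
  shows False
proof -
  define Hs where "Hs = (\<lambda>t::nat. if t = 0 then A else B)"
  have "\<exists>k::nat. \<exists>Hs::nat \<Rightarrow> nat set. k \<ge> 2 \<and> (\<forall>i<k. Hs i \<in> II) \<and>
    (\<forall>i. i + 1 < k \<longrightarrow> Or (Hs (i + 1)) \<in> Hs i - {Or (Hs i)}) \<and>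
    Or (Hs 0) \<in> Hs (k - 1) - {Or (Hs (k - 1))}"
  proof (rule exI[of _ 2], rule exI[of _ Hs], intro conjI allI impI)
    show "(2::nat) \<le> 2" by simp
    show "Hs i \<in> II" if "i < 2" for i using AB unfolding Hs_def by simp
    show "Or (Hs (i + 1)) \<in> Hs i - {Or (Hs i)}" if "i + 1 < 2" for i
    proof -
      have "i = 0" using that by simp
      then show ?thesis using c1 by (simp add: Hs_def)
    qed
    show "Or (Hs 0) \<in> Hs (2 - 1) - {Or (Hs (2 - 1))}"
      using c2 by (simp add: Hs_def)
  qed
  then show False using ac unfolding acyclic_orientation_def by blast
qed

context ih begin

lemma mem_iff: "H \<in> II \<Longrightarrow> c \<in> H \<longleftrightarrow> Min H \<le> c \<and> c \<le> Max H"
proof -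
  assume H: "H \<in> II"
  obtain a b where ab: "a \<le> b" "H = {a..b}" using intv[OF H] by blast
  then have "Min H = a" "Max H = b" by (auto intro!: Min_eqI Max_eqI)
  then show ?thesis using ab by auto
qed

definition Omin :: "nat set \<Rightarrow> nat" where
  "Omin = (\<lambda>H. if H \<in> II then Min H else 0)"

lemma Omin_AO: "Omin \<in> acyclic_orientations II"
proof -
  have o: "Omin \<in> orientations II" unfolding orientations_def Omin_def using H_basic(4) by auto
  have "acyclic_orientation II Omin"
  proof (rule rank_acyclic[where r = id])
    fix H b assume "H \<in> II" "b \<in> H" "b \<noteq> Omin H"
    then show "id (Omin H) < id b" unfolding Omin_def using Min_le[of H b] by simp
  qed
  then show ?thesis using o AO_iff by blast
qed

end

locale core = ih +
  fixes m j :: nat and H0 :: "nat set"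
  assumes H0: "H0 \<in> II" "j \<in> H0" "Min H0 = m" "m < j"
begin

definition X where "X = Xo II m j"

definition Y where
  "Y i = (\<lambda>H. if H \<in> II then (if j \<in> H \<and> m \<le> Min H \<and> Min H \<le> i then i
                 else if j \<in> H \<and> m \<le> Min H then j else Min H) else 0)"

definition R where "R = Rset II m j"

definition ist where "ist = Max R"

lemma m1: "1 \<le> m" using Min_ge1[OF H0(1)] H0(3) by simp

lemma jn: "j \<le> n" using mem_ge1[OF H0(1) H0(2)] by simp

lemma inH0: "m \<le> c \<Longrightarrow> c \<le> j \<Longrightarrow> c \<in> H0"
  using conv[OF H0(1) H_basic(4)[OF H0(1)] H0(2)] H0(3) by simp

lemma R_sub: "i \<in> R \<Longrightarrow> m \<le> i \<and> i < j" unfolding R_def Rset_def by auto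

lemma R_U: "i \<in> R \<Longrightarrow> G \<in> II \<Longrightarrow> G \<subseteq> {m..<j} \<Longrightarrow> i \<in> G \<Longrightarrow> i = Min G"
  unfolding R_def Rset_def by blast

lemma R_intro:
  assumes "m \<le> i" "i < j" "\<And>G. G \<in> II \<Longrightarrow> G \<subseteq> {m..<j} \<Longrightarrow> i \<in> G \<Longrightarrow> i = Min G"
  shows "i \<in> R"
proof -
  have "i \<notin> \<Union>{J - {Min J} |J. J \<in> II \<and> J \<subseteq> {m..<j}}" using assms(3) by fastforce
  then show ?thesis unfolding R_def Rset_def using assms(1,2) by simp
qed

lemma mR: "m \<in> R"
proof (rule R_intro)
  show "m \<le> m" "m < j" using H0 by auto
  fix G assume G: "G \<in> II" "G \<subseteq> {m..<j}" "m \<in> G"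
  have "Min G \<in> G" using H_basic(4)[OF G(1)] .
  then have "m \<le> Min G" using G(2) by auto
  moreover have "Min G \<le> m" using Min_le[OF G(1) G(3)] .
  ultimately show "m = Min G" by simp
qed

lemma finR: "finite R"
proof -
  have "R \<subseteq> {m..<j}" using R_sub by auto
  then show ?thesis by (rule finite_subset) simp
qed

lemma ist: "ist \<in> R" "i \<in> R \<Longrightarrow> i \<le> ist"
  unfolding ist_def using finR mR Max_in Max_ge by blast+

lemma YH0: "m \<le> i \<Longrightarrow> Y i H0 = i"
  unfolding Y_def using H0 by simp

lemma XH0: "X H0 = j"
  unfolding X_def Xo_def using H0 by simp

definition rX :: "nat \<Rightarrow> nat" where
  "rX v = (if v < m then v else if v = j then m else if v < j then v + 1 else v)"

lemma X_AO: "X \<in> acyclic_orientations II"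
proof -
  have o: "X \<in> orientations II" unfolding orientations_def X_def Xo_def using H_basic(4) by auto
  have "acyclic_orientation II X"
  proof (rule rank_acyclic[where r = rX])
    fix H b assume H: "H \<in> II" "b \<in> H" "b \<noteq> X H"
    let ?a = "Min H"
    have ab: "?a \<le> b" using Min_le H by blast
    have cv: "\<And>c. ?a \<le> c \<Longrightarrow> c \<le> b \<Longrightarrow> c \<in> H" using conv[OF H(1) H_basic(4)[OF H(1)] H(2)] by blast
    show "rX (X H) < rX b"
    proof (cases "j \<in> H \<and> m \<le> ?a")
      case True
      then have XH: "X H = j" unfolding X_def Xo_def using H by simp
      then have "b \<noteq> j" "m \<le> b" using H(3) True ab by auto
      then show ?thesis using XH H0(4) unfolding rX_def by auto
    next
      case False
      then have XH: "X H = ?a" unfolding X_def Xo_def using H by auto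
      then have ba: "?a < b" using ab H(3) by simp
      show ?thesis
      proof (cases "?a < m")
        case True
        then show ?thesis using XH ba H0(4) unfolding rX_def by auto
      next
        case am: False
        then have "j \<notin> H" using False by simp
        then have "\<not> (?a \<le> j \<and> j \<le> b)" using cv by blast
        then show ?thesis using XH ba am H0(4) unfolding rX_def by auto
      qed
    qed
  qed
  then show ?thesis using o AO_iff by blast
qed

lemma Y_orient: assumes "m \<le> i" "i < j" shows "Y i \<in> orientations II"
proof -
  have "Y i H \<in> H" if H: "H \<in> II" for H
  proof (cases "j \<in> H \<and> m \<le> Min H \<and> Min H \<le> i")
    case True
    then have "i \<in> H" using conv[OF H H_basic(4)[OF H], of j i] assms by simp
    then show ?thesis using True H unfolding Y_def by simp
  next
    case False
    then show ?thesis using H H_basic(4)[OF H] unfolding Y_def by auto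
  qed
  moreover have "Y i H = 0" if "H \<notin> II" for H using that unfolding Y_def by simp
  ultimately show ?thesis unfolding orientations_def by blast
qed

definition rY :: "nat \<Rightarrow> nat \<Rightarrow> nat" where
  "rY i v = (if v < m then v else if v = i then m else if v < i then v + 1
             else if v = j then i + 1 else if v < j then v + 1 else v)"

lemma Y_AO: assumes iR: "i \<in> R" shows "Y i \<in> acyclic_orientations II"
proof -
  have mi: "m \<le> i" "i < j" using R_sub[OF iR] by auto
  have o: "Y i \<in> orientations II" using Y_orient mi by blast
  have "acyclic_orientation II (Y i)"
  proof (rule rank_acyclic[where r = "rY i"])
    fix H b assume H: "H \<in> II" "b \<in> H" "b \<noteq> Y i H"
    let ?a = "Min H"
    have ab: "?a \<le> b" using Min_le H by blast
    have cv: "\<And>c. ?a \<le> c \<Longrightarrow> c \<le> b \<Longrightarrow> c \<in> H" using conv[OF H(1) H_basic(4)[OF H(1)] H(2)] by blast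
    show "rY i (Y i H) < rY i b"
    proof (cases "j \<in> H \<and> m \<le> ?a \<and> ?a \<le> i")
      case True
      then have YH: "Y i H = i" unfolding Y_def using H by simp
      then have "b \<noteq> i" "m \<le> b" using H(3) True ab by auto
      then show ?thesis using YH mi unfolding rY_def by auto
    next
      case F1: False
      show ?thesis
      proof (cases "j \<in> H \<and> m \<le> ?a")
        case True
        then have YH: "Y i H = j" "i < ?a" unfolding Y_def using H F1 by auto
        then have "b \<noteq> j" "i < b" using H(3) ab by auto
        then show ?thesis using YH mi unfolding rY_def by auto
      next
        case False
        then have YH: "Y i H = ?a" unfolding Y_def using H by auto
        then have ba: "?a < b" using ab H(3) by simp
        show ?thesis
        proof (cases "?a < m")
          case True
          then show ?thesis using YH ba mi unfolding rY_def by auto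
        next
          case am: False
          then have jH: "j \<notin> H" using False by simp
          show ?thesis
          proof (cases "j < ?a")
            case True
            then show ?thesis using YH ba mi unfolding rY_def by auto
          next
            case aj: False
            have Hsub: "H \<subseteq> {m..<j}"
            proof
              fix c assume c: "c \<in> H"
              have "?a \<le> c" using Min_le[OF H(1) c] .
              moreover have "c < j"
              proof (rule ccontr)
                assume "\<not> c < j"
                then have "j \<in> H" using conv[OF H(1) H_basic(4)[OF H(1)] c] aj by simp
                then show False using jH by simp
              qed
              ultimately show "c \<in> {m..<j}" using am by simp
            qed
            have bj: "b < j" using Hsub H(2) by auto
            have iU: "i \<in> H \<Longrightarrow> i = ?a" using R_U[OF iR H(1) Hsub] by blast
            show ?thesis
            proof (cases "i = ?a")
              case True
              then show ?thesis using YH ba bj mi unfolding rY_def by auto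
            next
              case False
              then have "i \<notin> H" using iU by blast
              then have "\<not> (?a \<le> i \<and> i \<le> b)" using cv by blast
              then show ?thesis using YH ba bj mi am False unfolding rY_def by auto
            qed
          qed
        qed
      qed
    qed
  qed
  then show ?thesis using o AO_iff by blast
qed

end

context core begin

lemma Y_flip:
  assumes mi: "m \<le> i" "i < j"
  shows "increasing_flip n II (Y i) X"
proof -
  have ne: "Y i \<noteq> X"
  proof
    assume "Y i = X"
    then have "Y i H0 = X H0" by simp
    then show False using YH0[OF mi(1)] XH0 mi by simp
  qed
  have i1: "1 \<le> i" using m1 mi by simp
  have fl: "\<forall>H\<in>II. (Y i H \<noteq> X H \<longrightarrow> Y i H = i \<and> X H = j) \<and> ({i, j} \<subseteq> H \<longrightarrow> (Y i H = i \<longleftrightarrow> X H = j))"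
  proof
    fix H assume H: "H \<in> II"
    show "(Y i H \<noteq> X H \<longrightarrow> Y i H = i \<and> X H = j) \<and> ({i, j} \<subseteq> H \<longrightarrow> (Y i H = i \<longleftrightarrow> X H = j))"
    proof (cases "j \<in> H \<and> m \<le> Min H")
      case True
      then show ?thesis using H Min_le[OF H, of i] unfolding Y_def X_def Xo_def by auto
    next
      case False
      then have YX: "Y i H = Min H" "X H = Min H" using H unfolding Y_def X_def Xo_def by auto
      show ?thesis
      proof (rule conjI; rule impI)
        assume "Y i H \<noteq> X H" then show "Y i H = i \<and> X H = j" using YX by simp
      next
        assume ij: "{i, j} \<subseteq> H"
        then have "Min H \<le> i" using Min_le[OF H] by simp
        then have "Min H < m" using False ij by auto
        then show "(Y i H = i) = (X H = j)" using YX mi by auto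
      qed
    qed
  qed
  show ?thesis unfolding increasing_flip_def
    by (rule conjI[OF ne], rule exI[of _ i], rule exI[of _ j]) (use i1 mi jn fl in blast)
qed

lemma flip_to_X:
  assumes co: "c \<in> orientations II" and fl: "increasing_flip n II c X"
  shows "\<exists>i. m \<le> i \<and> i < j \<and> c = Y i"
proof -
  obtain i k where ne: "c \<noteq> X" and ik: "1 \<le> i" "i < k" "k \<le> n"
    and f: "\<forall>H\<in>II. (c H \<noteq> X H \<longrightarrow> c H = i \<and> X H = k) \<and> ({i, k} \<subseteq> H \<longrightarrow> (c H = i \<longleftrightarrow> X H = k))"
    using fl unfolding increasing_flip_def by blast
  have "\<exists>H. c H \<noteq> X H" using ne by (simp add: fun_eq_iff)
  then obtain H where cH: "c H \<noteq> X H" by blast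
  have H: "H \<in> II"
  proof (rule ccontr)
    assume "H \<notin> II"
    then have "c H = 0" "X H = 0" using orient_out[OF co] unfolding X_def Xo_def by auto
    then show False using cH by simp
  qed
  have ci: "c H = i" "X H = k" using f H cH by auto
  have "i \<in> H" using orient_in[OF co H] ci by simp
  then have mi: "Min H \<le> i" using Min_le[OF H] by simp
  have XH: "X H = (if j \<in> H \<and> m \<le> Min H then j else Min H)" unfolding X_def Xo_def using H by simp
  have cond: "j \<in> H \<and> m \<le> Min H" and kj: "k = j"
    using XH ci mi ik by (auto split: if_splits)
  have mi2: "m \<le> i" using cond mi by simp
  have ij: "i < j" using ik kj by simp
  have "c = Y i"
  proof (rule orient_eq[OF co Y_orient[OF mi2 ij]])
    fix G assume G: "G \<in> II"
    have XG: "X G = (if j \<in> G \<and> m \<le> Min G then j else Min G)" unfolding X_def Xo_def using G by simp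
    show "c G = Y i G"
    proof (cases "j \<in> G \<and> m \<le> Min G \<and> Min G \<le> i")
      case True
      then have "i \<in> G" using conv[OF G H_basic(4)[OF G], of j i] ij by simp
      then have "c G = i" using f G True XG kj by auto
      then show ?thesis using True G unfolding Y_def by simp
    next
      case False
      have YG: "Y i G = X G" using False G XG unfolding Y_def by auto
      have "c G = X G"
      proof (rule ccontr)
        assume a: "c G \<noteq> X G"
        then have cg: "c G = i" "X G = j" using f G kj by auto
        have "i \<in> G" using orient_in[OF co G] cg by simp
        then have "Min G \<le> i" using Min_le[OF G] by simp
        then show False using False XG cg ij by (auto split: if_splits)
      qed
      then show ?thesis using YG by simp
    qed
  qed
  then show ?thesis using mi2 ij by blast
qed

lemma Y_acyc_R:
  assumes mi: "m \<le> i" "i < j" and ac: "acyclic_orientation II (Y i)"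
  shows "i \<in> R"
proof (rule R_intro[OF mi])
  fix G assume G: "G \<in> II" "G \<subseteq> {m..<j}" "i \<in> G"
  show "i = Min G"
  proof (rule ccontr)
    assume ne: "i \<noteq> Min G"
    have gG: "Min G \<in> G" using H_basic(4)[OF G(1)] .
    then have gb: "m \<le> Min G" "Min G < j" using G(2) by auto
    have jG: "j \<notin> G" using G(2) by auto
    have YG: "Y i G = Min G" using G(1) jG unfolding Y_def by simp
    have YH: "Y i H0 = i" using YH0[OF mi(1)] .
    have "Min G \<in> H0" using inH0 gb by simp
    then show False
      using two_cycle[OF ac H0(1) G(1)] YG YH ne G(3) by auto
  qed
qed

lemma cover_Y:
  assumes k0: "k0 \<in> R" and uniq: "\<And>k. k \<in> R \<Longrightarrow> (\<forall>H. Y k0 H \<le> Y k H) \<Longrightarrow> k = k0"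
  shows "P_covers n II X (Y k0)"
  unfolding P_covers_def
proof (intro conjI)
  have mk: "m \<le> k0" "k0 < j" using R_sub[OF k0] by auto
  show yA: "Y k0 \<in> acyclic_orientations II" using Y_AO[OF k0] .
  show xA: "X \<in> acyclic_orientations II" using X_AO .
  have fl: "increasing_flip n II (Y k0) X" using Y_flip[OF mk] .
  show "P_le n II (Y k0) X" using P_le_step[OF yA xA fl] .
  show "Y k0 \<noteq> X" using fl unfolding increasing_flip_def by blast
  show "\<not> (\<exists>z\<in>acyclic_orientations II. P_le n II (Y k0) z \<and> P_le n II z X \<and> z \<noteq> Y k0 \<and> z \<noteq> X)"
  proof
    assume "\<exists>z\<in>acyclic_orientations II. P_le n II (Y k0) z \<and> P_le n II z X \<and> z \<noteq> Y k0 \<and> z \<noteq> X"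
    then obtain z where z: "z \<in> acyclic_orientations II" "P_le n II (Y k0) z" "P_le n II z X"
      "z \<noteq> Y k0" "z \<noteq> X" by blast
    obtain w where w: "P_le n II z w" "w \<in> acyclic_orientations II" "increasing_flip n II w X"
      using P_le_last[OF z(3,5)] by blast
    have wo: "w \<in> orientations II" "acyclic_orientation II w" using w(2) AO_iff by auto
    obtain k where k: "m \<le> k" "k < j" "w = Y k" using flip_to_X[OF wo(1) w(3)] by blast
    have kR: "k \<in> R" using Y_acyc_R[OF k(1,2)] wo(2) k(3) by simp
    have le1: "\<forall>H. Y k0 H \<le> z H" using P_le_cw[OF z(2)] by blast
    have le2: "\<forall>H. z H \<le> Y k H" using P_le_cw[OF w(1)] k(3) by simp
    have "\<forall>H. Y k0 H \<le> Y k H" using le1 le2 order_trans by blast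
    then have "k = k0" using uniq kR by blast
    then have "z = Y k0" using le1 le2 by (simp add: fun_eq_iff antisym)
    then show False using z(4) by simp
  qed
qed

lemma ist_cover: "P_covers n II X (Y ist)"
proof (rule cover_Y[OF ist(1)])
  fix k assume k: "k \<in> R" "\<forall>H. Y ist H \<le> Y k H"
  have "Y ist H0 \<le> Y k H0" using k(2) by blast
  then have "ist \<le> k" using YH0 R_sub[OF k(1)] R_sub[OF ist(1)] by simp
  then show "k = ist" using ist(2)[OF k(1)] by simp
qed

lemma Y_flip2:
  assumes cond: "\<not> (\<exists>H\<in>II. j \<in> H \<and> m < Min H \<and> Min H \<le> ist)"
    and iR: "i \<in> R" and ii: "i < ist"
  shows "increasing_flip n II (Y i) (Y ist)"
proof -
  have mi: "m \<le> i" "i < j" using R_sub[OF iR] by auto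
  have ms: "m \<le> ist" "ist < j" using R_sub[OF ist(1)] by auto
  have ne: "Y i \<noteq> Y ist"
  proof
    assume "Y i = Y ist"
    then have "Y i H0 = Y ist H0" by simp
    then show False using YH0[OF mi(1)] YH0[OF ms(1)] ii by simp
  qed
  have i1: "1 \<le> i" using m1 mi by simp
  have sn: "ist \<le> n" using ms jn by simp
  have fl: "\<forall>H\<in>II. (Y i H \<noteq> Y ist H \<longrightarrow> Y i H = i \<and> Y ist H = ist) \<and>
      ({i, ist} \<subseteq> H \<longrightarrow> (Y i H = i \<longleftrightarrow> Y ist H = ist))"
  proof
    fix H assume H: "H \<in> II"
    show "(Y i H \<noteq> Y ist H \<longrightarrow> Y i H = i \<and> Y ist H = ist) \<and>
      ({i, ist} \<subseteq> H \<longrightarrow> (Y i H = i \<longleftrightarrow> Y ist H = ist))"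
    proof (cases "j \<in> H \<and> m \<le> Min H")
      case True
      show ?thesis
      proof (cases "Min H \<le> i")
        case True2: True
        then show ?thesis using True H ii unfolding Y_def by auto
      next
        case False2: False
        then have "\<not> Min H \<le> ist" using cond H True mi by auto
        then have YY: "Y i H = j" "Y ist H = j" using True False2 H unfolding Y_def by auto
        have nsub: "\<not> {i, ist} \<subseteq> H" using Min_le[OF H, of i] False2 by auto
        show ?thesis
        proof (rule conjI; rule impI)
          assume "Y i H \<noteq> Y ist H" then show "Y i H = i \<and> Y ist H = ist" using YY by simp
        next
          assume "{i, ist} \<subseteq> H" then show "(Y i H = i) = (Y ist H = ist)" using nsub by blast
        qed
      qed
    next
      case False
      then have YY: "Y i H = Min H" "Y ist H = Min H" using H unfolding Y_def by auto
      show ?thesis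
      proof (rule conjI; rule impI)
        assume "Y i H \<noteq> Y ist H" then show "Y i H = i \<and> Y ist H = ist" using YY by simp
      next
        assume sub: "{i, ist} \<subseteq> H"
        then have ai: "Min H \<le> i" using Min_le[OF H] by simp
        have "Min H \<noteq> i"
        proof
          assume ai2: "Min H = i"
          then have jH: "j \<notin> H" using False mi by simp
          have Hsub: "H \<subseteq> {m..<j}"
          proof
            fix c assume c: "c \<in> H"
            have "Min H \<le> c" using Min_le[OF H c] .
            moreover have "c < j"
            proof (rule ccontr)
              assume "\<not> c < j"
              then have "j \<in> H" using conv[OF H H_basic(4)[OF H] c] ai2 mi by simp
              then show False using jH by simp
            qed
            ultimately show "c \<in> {m..<j}" using ai2 mi by simp
          qed
          have "ist = Min H" using R_U[OF ist(1) H Hsub] sub by simp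
          then show False using ai2 ii by simp
        qed
        then show "(Y i H = i) = (Y ist H = ist)" using YY ai ii by auto
      qed
    qed
  qed
  show ?thesis unfolding increasing_flip_def
    by (rule conjI[OF ne], rule exI[of _ i], rule exI[of _ ist]) (use i1 ii sn fl in blast)
qed

theorem core_JI:
  "P_join_irreducible n II X \<longleftrightarrow> \<not> (\<exists>H\<in>II. j \<in> H \<and> m < Min H \<and> Min H \<le> ist)"
proof
  assume ji: "P_join_irreducible n II X"
  then have ex1: "\<exists>!c. P_covers n II X c" unfolding P_join_irreducible_def by blast
  show "\<not> (\<exists>H\<in>II. j \<in> H \<and> m < Min H \<and> Min H \<le> ist)"
  proof
    assume "\<exists>H\<in>II. j \<in> H \<and> m < Min H \<and> Min H \<le> ist"
    then obtain H1 where H1: "H1 \<in> II" "j \<in> H1" "m < Min H1" "Min H1 \<le> ist" by blast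
    define h where "h = Min H1"
    define R' where "R' = {k \<in> R. k < h}"
    have mR': "m \<in> R'" unfolding R'_def h_def using mR H1 by simp
    have finR': "finite R'" unfolding R'_def using finR by simp
    define r where "r = Max R'"
    have rR': "r \<in> R'" unfolding r_def using Max_in[OF finR'] mR' by blast
    have rmax: "\<And>k. k \<in> R' \<Longrightarrow> k \<le> r" unfolding r_def using Max_ge[OF finR'] by blast
    have rR: "r \<in> R" "r < h" using rR' unfolding R'_def by auto
    have cr: "P_covers n II X (Y r)"
    proof (rule cover_Y[OF rR(1)])
      fix k assume k: "k \<in> R" "\<forall>H. Y r H \<le> Y k H"
      have mk: "m \<le> k" "k < j" using R_sub[OF k(1)] by auto
      have mr: "m \<le> r" "r < j" using R_sub[OF rR(1)] by auto
      have "Y r H0 \<le> Y k H0" using k(2) by blast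
      then have rk: "r \<le> k" using YH0 mk mr by simp
      have "Y r H1 \<le> Y k H1" using k(2) by blast
      moreover have "Y r H1 = j" using H1 rR unfolding Y_def h_def by auto
      moreover have "Y k H1 = (if h \<le> k then k else j)" using H1 unfolding Y_def h_def by auto
      ultimately have "k < h" using mk by (auto split: if_splits)
      then have "k \<in> R'" unfolding R'_def using k(1) by simp
      then show "k = r" using rmax rk by fastforce
    qed
    have ci: "P_covers n II X (Y ist)" using ist_cover .
    have "Y r \<noteq> Y ist"
    proof
      assume "Y r = Y ist"
      then have "Y r H0 = Y ist H0" by simp
      then have "r = ist" using YH0 R_sub[OF rR(1)] R_sub[OF ist(1)] by simp
      then show False using rR(2) H1(4) unfolding h_def by simp
    qed
    then show False using ex1 cr ci by blast
  qed
next
  assume cond: "\<not> (\<exists>H\<in>II. j \<in> H \<and> m < Min H \<and> Min H \<le> ist)"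
  have xA: "X \<in> acyclic_orientations II" using X_AO .
  have nm: "\<not> (\<forall>y\<in>acyclic_orientations II. P_le n II X y)"
  proof
    assume "\<forall>y\<in>acyclic_orientations II. P_le n II X y"
    then have "P_le n II X Omin" using Omin_AO by blast
    then have "X H0 \<le> Omin H0" using P_le_cw by blast
    then show False using XH0 H0 unfolding Omin_def by simp
  qed
  have uq: "c = Y ist" if c: "P_covers n II X c" for c
  proof -
    have cf: "c \<in> acyclic_orientations II" "increasing_flip n II c X" using covers_flip[OF c] by auto
    have co: "c \<in> orientations II" "acyclic_orientation II c" using cf(1) AO_iff by auto
    obtain i where i: "m \<le> i" "i < j" "c = Y i" using flip_to_X[OF co(1) cf(2)] by blast
    have iR: "i \<in> R" using Y_acyc_R[OF i(1,2)] co(2) i(3) by simp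
    show ?thesis
    proof (rule ccontr)
      assume ne: "c \<noteq> Y ist"
      then have ii: "i < ist" using ist(2)[OF iR] i(3) by (cases "i = ist") auto
      have fl: "increasing_flip n II (Y i) (Y ist)" using Y_flip2[OF cond iR ii] .
      have yA: "Y ist \<in> acyclic_orientations II" using Y_AO[OF ist(1)] .
      have p1: "P_le n II c (Y ist)" using P_le_step[OF _ yA fl] cf(1) i(3) by simp
      have ci: "P_covers n II X (Y ist)" using ist_cover .
      then have p2: "P_le n II (Y ist) X" "Y ist \<noteq> X" unfolding P_covers_def by auto
      then show False using c yA p1 ne unfolding P_covers_def by blast
    qed
  qed
  show "P_join_irreducible n II X"
    unfolding P_join_irreducible_def using xA nm ist_cover uq by blast
qed

end

context ih begin

lemma inter_in:
  assumes "finite F" "F \<noteq> {}" "F \<subseteq> {H \<in> II. i \<in> H}"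
  shows "\<Inter>F \<in> II \<and> i \<in> \<Inter>F"
  using assms
proof (induction F rule: finite_ne_induct)
  case (singleton x) then show ?case by simp
next
  case (insert x F)
  then have a: "\<Inter>F \<in> II" "i \<in> \<Inter>F" "x \<in> II" "i \<in> x" by auto
  then have "x \<inter> \<Inter>F \<noteq> {}" by blast
  then have "x \<inter> \<Inter>F \<in> II" using ci a unfolding closed_under_intersection_def by blast
  then show ?case using a by simp
qed

lemma J_props:
  assumes ex: "\<exists>H\<in>II. {i, j} \<subseteq> H"
  shows "J_set II i j \<in> II" "{i, j} \<subseteq> J_set II i j"
    "\<And>H. H \<in> II \<Longrightarrow> {i, j} \<subseteq> H \<Longrightarrow> J_set II i j \<subseteq> H"
proof -
  define F where "F = {H \<in> II. {i, j} \<subseteq> H}"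
  have fin: "finite F" unfolding F_def using finII by simp
  have ne: "F \<noteq> {}" unfolding F_def using ex by blast
  have "F \<subseteq> {H \<in> II. i \<in> H}" unfolding F_def by blast
  then have "\<Inter>F \<in> II" using inter_in[OF fin ne] by blast
  then show "J_set II i j \<in> II" unfolding J_set_def F_def by simp
  show "{i, j} \<subseteq> J_set II i j" unfolding J_set_def by blast
  show "\<And>H. H \<in> II \<Longrightarrow> {i, j} \<subseteq> H \<Longrightarrow> J_set II i j \<subseteq> H" unfolding J_set_def by blast
qed

lemma mkcore:
  assumes "H0 \<in> II" "j \<in> H0" "Min H0 = m" "m < j"
  shows "core n II m j H0"
  unfolding core_def core_axioms_def using ih_axioms assms by blast

lemma IJ_core:
  assumes ij: "(i, j) \<in> IJ n II"
  shows "core n II (mu II i j) j (J_set II i j)" "mu II i j \<le> i" "i = core.ist II (mu II i j) j"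
    "\<not> (\<exists>H\<in>II. j \<in> H \<and> mu II i j < Min H \<and> Min H \<le> i)"
proof -
  have ij2: "1 \<le> i" "i < j" "j \<le> n" "\<exists>I\<in>II. {i, j} \<subseteq> I" "i = Max (Rset II (mu II i j) j)"
    using ij unfolding IJ_Rset by auto
  let ?K = "J_set II i j"
  have K: "?K \<in> II" "{i, j} \<subseteq> ?K" "\<And>H. H \<in> II \<Longrightarrow> {i, j} \<subseteq> H \<Longrightarrow> ?K \<subseteq> H"
    using J_props[OF ij2(4)] by auto
  have mK: "mu II i j = Min ?K" unfolding mu_def by simp
  have mi: "mu II i j \<le> i" using Min_le[OF K(1)] K(2) mK by simp
  show "core n II (mu II i j) j ?K" using mkcore[OF K(1) _ mK[symmetric]] K(2) mi ij2(2) by simp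
  show "mu II i j \<le> i" by fact
  show "i = core.ist II (mu II i j) j" using ij2(5) core.ist_def core.R_def
    by (metis \<open>core n II (mu II i j) j ?K\<close>)
  show "\<not> (\<exists>H\<in>II. j \<in> H \<and> mu II i j < Min H \<and> Min H \<le> i)"
  proof
    assume "\<exists>H\<in>II. j \<in> H \<and> mu II i j < Min H \<and> Min H \<le> i"
    then obtain H where H: "H \<in> II" "j \<in> H" "mu II i j < Min H" "Min H \<le> i" by blast
    have "i \<in> H" using conv[OF H(1) H_basic(4)[OF H(1)] H(2)] H(4) ij2(2) by simp
    then have "?K \<subseteq> H" using K(3) H by simp
    then have "Min H \<le> Min ?K" using Min_le[OF H(1)] H_basic(4)[OF K(1)] by blast
    then show False using H(3) mK by simp
  qed
qed


lemma img_JI: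
  assumes ij: "(i, j) \<in> IJ n II"
  shows "A_orient II i j \<in> {Or \<in> acyclic_orientations II. P_join_irreducible n II Or}"
proof -
  have cc: "core n II (mu II i j) j (J_set II i j)" and ii: "i = core.ist II (mu II i j) j"
    and cond: "\<not> (\<exists>H\<in>II. j \<in> H \<and> mu II i j < Min H \<and> Min H \<le> i)"
    using IJ_core[OF ij] by auto
  have "P_join_irreducible n II (core.X II (mu II i j) j)"
    using core.core_JI[OF cc] cond ii by simp
  moreover have "core.X II (mu II i j) j = A_orient II i j"
    using core.X_def[OF cc] A_orient_Xo by simp
  ultimately show ?thesis unfolding P_join_irreducible_def by auto
qed

lemma XoK:
  assumes "K \<in> II" "j \<in> K" "m \<le> Min K"
  shows "Xo II m j K = j"
  unfolding Xo_def using assms by simp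

lemma inj_A: "inj_on (\<lambda>(i, j). A_orient II i j) (IJ n II)"
proof (rule inj_onI, clarify)
  fix i j i' j'
  assume ij: "(i, j) \<in> IJ n II" and ij': "(i', j') \<in> IJ n II"
    and eq: "A_orient II i j = A_orient II i' j'"
  have c: "core n II (mu II i j) j (J_set II i j)" and c': "core n II (mu II i' j') j' (J_set II i' j')"
    using IJ_core ij ij' by auto
  let ?K = "J_set II i j" and ?K' = "J_set II i' j'"
  let ?m = "mu II i j" and ?m' = "mu II i' j'"
  have K: "?K \<in> II" "j \<in> ?K" "Min ?K = ?m" "?m < j" using c unfolding core_def core_axioms_def by auto
  have K': "?K' \<in> II" "j' \<in> ?K'" "Min ?K' = ?m'" "?m' < j'" using c' unfolding core_def core_axioms_def by auto
  have eq2: "Xo II ?m j = Xo II ?m' j'" using eq A_orient_Xo by simp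
  have x1: "Xo II ?m j ?K = j" by (rule XoK[OF K(1,2)]) (simp add: K(3))
  have x2: "Xo II ?m' j' ?K' = j'" by (rule XoK[OF K'(1,2)]) (simp add: K'(3))
  have y1: "Xo II ?m' j' ?K = j" using x1 eq2 by simp
  have y2: "Xo II ?m j ?K' = j'" using x2 eq2 by simp
  have a: "j = j' \<and> ?m' \<le> ?m"
  proof (cases "j' \<in> ?K \<and> ?m' \<le> Min ?K")
    case True
    then show ?thesis using y1 K(1,3) unfolding Xo_def by simp
  next
    case False
    then have "Xo II ?m' j' ?K = Min ?K" unfolding Xo_def by (simp only: if_P[OF K(1)] if_not_P[OF False] if_False)
    then have "Min ?K = j" using y1 by simp
    then show ?thesis using K(3,4) by simp
  qed
  have b: "?m \<le> ?m'"
  proof (cases "j \<in> ?K' \<and> ?m \<le> Min ?K'")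
    case True
    then show ?thesis using K'(3) by simp
  next
    case False
    then have "Xo II ?m j ?K' = Min ?K'" unfolding Xo_def by (simp only: if_P[OF K'(1)] if_not_P[OF False] if_False)
    then have "Min ?K' = j'" using y2 by simp
    then show ?thesis using K'(3,4) by simp
  qed
  have r1: "i = Max (Rset II ?m j)" using ij unfolding IJ_Rset mem_Collect_eq case_prod_conv by blast
  have r2: "i' = Max (Rset II ?m' j')" using ij' unfolding IJ_Rset mem_Collect_eq case_prod_conv by blast
  have mm: "?m = ?m'" using a b by simp
  have jj: "j = j'" using a by simp
  have eqM: "Max (Rset II ?m j) = Max (Rset II ?m' j')"
    using arg_cong2[OF mm jj, of "\<lambda>a b. Max (Rset II a b)"] by simp
  have "i = i'" using r1 r2 eqM by metis
  then show "i = i' \<and> j = j'" using a by simp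
qed

lemma surj_A:
  assumes xA: "x \<in> acyclic_orientations II" and ji: "P_join_irreducible n II x"
  shows "x \<in> (\<lambda>(i, j). A_orient II i j) ` IJ n II"
proof -
  obtain j where ex: "\<exists>H0\<in>II. x H0 = j \<and> Min H0 \<noteq> j" and vals: "\<forall>H\<in>II. x H = j \<or> x H = Min H"
    using JI_single[OF ji] by blast
  define S where "S = {H \<in> II. x H = j \<and> Min H \<noteq> j}"
  have finS: "finite (Min ` S)" unfolding S_def using finII by simp
  have neS: "Min ` S \<noteq> {}" unfolding S_def using ex by blast
  define m where "m = Min (Min ` S)"
  have "m \<in> Min ` S" unfolding m_def using Min_in[OF finS neS] .
  then obtain H0 where H0S': "m = Min H0" "H0 \<in> S" by (rule imageE)
  then have H0S: "H0 \<in> S" "Min H0 = m" by auto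
  have H0: "H0 \<in> II" "x H0 = j" "Min H0 \<noteq> j" using H0S unfolding S_def by auto
  have H0min: "\<And>H. H \<in> II \<Longrightarrow> x H = j \<Longrightarrow> Min H \<noteq> j \<Longrightarrow> Min H0 \<le> Min H"
  proof -
    fix H assume "H \<in> II" "x H = j" "Min H \<noteq> j"
    then have "Min H \<in> Min ` S" unfolding S_def by blast
    then show "Min H0 \<le> Min H" using Min.coboundedI[OF finS] H0S(2) unfolding m_def by simp
  qed
  have xX: "x = Xo II m j" using single_form[OF xA vals H0 H0min] H0S(2) by simp
  have xo: "x \<in> orientations II" using xA AO_iff by blast
  have jH0: "j \<in> H0" using orient_in[OF xo H0(1)] H0(2) by simp
  have mj: "m < j" using Min_le[OF H0(1) jH0] H0(3) H0S(2) by simp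
  have cc: "core n II m j H0" using mkcore[OF H0(1) jH0 H0S(2) mj] .
  have XX: "core.X II m j = x" using core.X_def[OF cc] xX by simp
  have cond: "\<not> (\<exists>H\<in>II. j \<in> H \<and> m < Min H \<and> Min H \<le> core.ist II m j)"
    using core.core_JI[OF cc] ji XX by simp
  define i where "i = core.ist II m j"
  have iR: "i \<in> core.R II m j" unfolding i_def using core.ist(1)[OF cc] .
  have mi: "m \<le> i" "i < j" using core.R_sub[OF cc iR] by auto
  have iH0: "i \<in> H0" using core.inH0[OF cc] mi by simp
  have ex2: "\<exists>H\<in>II. {i, j} \<subseteq> H" using H0(1) iH0 jH0 by blast
  let ?K = "J_set II i j"
  have K: "?K \<in> II" "{i, j} \<subseteq> ?K" "?K \<subseteq> H0" using J_props[OF ex2] H0(1) iH0 jH0 by auto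
  have "Min ?K \<in> H0" using K(3) H_basic(4)[OF K(1)] by blast
  then have k1: "m \<le> Min ?K" using Min_le[OF H0(1)] H0S(2) by simp
  have k2: "Min ?K \<le> i" using Min_le[OF K(1)] K(2) by simp
  have cond': "\<not> (\<exists>H\<in>II. j \<in> H \<and> m < Min H \<and> Min H \<le> i)" using cond unfolding i_def .
  have "\<not> m < Min ?K" using cond' K(1,2) k2 by blast
  then have muij: "mu II i j = m" unfolding mu_def using k1 by simp
  have "(i, j) \<in> IJ n II"
    unfolding IJ_Rset
  proof (clarify, intro conjI)
    show "1 \<le> i" using core.m1[OF cc] mi by simp
    show "i < j" by fact
    show "j \<le> n" using core.jn[OF cc] .
    show "\<exists>I\<in>II. {i, j} \<subseteq> I" by fact
    have "core.ist II m j = Max (Rset II m j)" using core.ist_def[OF cc] core.R_def[OF cc] by simp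
    then show "i = Max (Rset II (mu II i j) j)" unfolding muij using i_def by simp
  qed
  moreover have "x = (\<lambda>(i, j). A_orient II i j) (i, j)" using A_orient_Xo muij xX by simp
  ultimately show ?thesis by (rule image_eqI[rotated])
qed

lemma main:
  "bij_betw (\<lambda>(i, j). A_orient II i j) (IJ n II)
     {Or \<in> acyclic_orientations II. P_join_irreducible n II Or}"
  unfolding bij_betw_def
proof
  show "inj_on (\<lambda>(i, j). A_orient II i j) (IJ n II)" by (rule inj_A)
  show "(\<lambda>(i, j). A_orient II i j) ` IJ n II = {Or \<in> acyclic_orientations II. P_join_irreducible n II Or}"
  proof
    show "(\<lambda>(i, j). A_orient II i j) ` IJ n II \<subseteq> {Or \<in> acyclic_orientations II. P_join_irreducible n II Or}"
      using img_JI by auto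
    show "{Or \<in> acyclic_orientations II. P_join_irreducible n II Or} \<subseteq> (\<lambda>(i, j). A_orient II i j) ` IJ n II"
      using surj_A by blast
  qed
qed

end

theorem proposition6p21:
  fixes n :: nat and \<I> :: "nat set set"
  assumes "interval_hypergraph n \<I>"
    and "closed_under_intersection \<I>"
  shows "bij_betw (\<lambda>(i, j). A_orient \<I> i j) (IJ n \<I>)
           {Or \<in> acyclic_orientations \<I>. P_join_irreducible n \<I> Or}"
proof -
  have "ih n \<I>" using assms by (simp add: ih_def)
  then show ?thesis by (rule ih.main)
qed

end
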